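(* Let $\sigma$ be an erasing $k$-block substitution with $w_\epsilon\ne1^k$. Then for every $x\in f_\sigma(\mathbb I)\setminus\mathcal Q_2^0$, the fiber $f_\sigma^{-1}(x)$ is uncountable.
   Context: Notation: $\mathbb I=[0,1]$. $\mathcal Q_2^0$ is the set of dyadic rationals in $[0,1)$, i.e. the dyadic rationals of $\mathbb I$ other than $1$. $\{0,1\}^*$ and $\{0,1\}^\omega$ denote finite and infinite binary words, and $\epsilon$ is the empty word. For a word $w$, set $0.w=\sum_iw_i2^{-i}$. For $x\in(0,1]$, $\widetilde x$ is the unique infinite binary expansion of $x$ not ending in $0^\infty$. Fix $k\ge2$. An erasing $k$-block substitution is a map $\sigma:\{0,1\}^k\to\{0,1\}^*$ with exactly one block $w_\epsilon$ such that $\sigma(w_\epsilon)=\epsilon$. It acts blockwise on infinite words, concatenating the images of consecutive $k$-blocks. The map $f_\sigma:\mathbb I\to\mathbb I$ is defined by $f_\sigma(x)=0.\sigma(\widetilde x)$ if $x\in(0,1]$ and $\widetilde x\neq w_\epsilon^\infty$, and $f_\sigma(x)=0$ otherwise. *)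

theory Defs
  imports "HOL-Analysis.Analysis"
begin

text \<open>Binary words are lists of booleans (True = 1, False = 0); infinite binary
words are functions nat => bool, position 0 being the first digit.\<close>

definition bin_val :: "bool list \<Rightarrow> real" where
  "bin_val w = (\<Sum>i<length w. (if w ! i then 1 else 0) / 2 ^ (i + 1))"

definition inf_bin_val :: "(nat \<Rightarrow> bool) \<Rightarrow> real" where
  "inf_bin_val d = (\<Sum>i. (if d i then 1 else 0) / 2 ^ (i + 1))"

definition bin_exp :: "real \<Rightarrow> (nat \<Rightarrow> bool)" where
  "bin_exp x = (THE d. inf_bin_val d = x \<and> (\<forall>N. \<exists>i\<ge>N. d i))"

definition Q2_0 :: "real set" where
  "Q2_0 = {x. 0 \<le> x \<and> x < 1 \<and> (\<exists>(a::int) (n::nat). x = a / 2 ^ n)}"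

definition erasing_subst :: "nat \<Rightarrow> (bool list \<Rightarrow> bool list) \<Rightarrow> bool" where
  "erasing_subst k \<sigma> \<longleftrightarrow> (\<exists>!w. length w = k \<and> \<sigma> w = [])"

definition w_eps :: "nat \<Rightarrow> (bool list \<Rightarrow> bool list) \<Rightarrow> bool list" where
  "w_eps k \<sigma> = (THE w. length w = k \<and> \<sigma> w = [])"

definition block :: "nat \<Rightarrow> (nat \<Rightarrow> bool) \<Rightarrow> nat \<Rightarrow> bool list" where
  "block k d m = map (\<lambda>j. d (m * k + j)) [0..<k]"

text \<open>0.sigma(d): the value of the concatenation of sigma applied to consecutive
k-blocks (finite or infinite word), as the limit of the values of its prefixes
sigma(b_0)...sigma(b_(n-1)).\<close>
definition subst_val :: "nat \<Rightarrow> (bool list \<Rightarrow> bool list) \<Rightarrow> (nat \<Rightarrow> bool) \<Rightarrow> real" where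
  "subst_val k \<sigma> d = lim (\<lambda>n. bin_val (concat (map (\<lambda>m. \<sigma> (block k d m)) [0..<n])))"

definition f_sigma :: "nat \<Rightarrow> (bool list \<Rightarrow> bool list) \<Rightarrow> real \<Rightarrow> real" where
  "f_sigma k \<sigma> x =
     (if 0 < x \<and> x \<le> 1 \<and> \<not> (\<forall>i. bin_exp x i = w_eps k \<sigma> ! (i mod k))
      then subst_val k \<sigma> (bin_exp x) else 0)"

end

theory Submission imports Defs begin


lemma bin_val_snoc: "bin_val (w @ [a]) = bin_val w + (if a then 1 else 0) / 2^(length w + 1)"
  unfolding bin_val_def by (simp add: nth_append)

lemma bin_val_append_ge: "bin_val w \<le> bin_val (w @ v)"
proof (induction v rule: rev_induct)
  case Nil then show ?case by simp
next
  case (snoc a v)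
  have "bin_val (w @ v) \<le> bin_val (w @ v @ [a])"
    using bin_val_snoc[of "w @ v" a] by simp
  with snoc show ?case by simp
qed

lemma bin_val_bounds: "0 \<le> bin_val w \<and> bin_val w \<le> 1 - 1/2^length w"
proof (induction w rule: rev_induct)
  case Nil then show ?case by (simp add: bin_val_def)
next
  case (snoc a v)
  have "(if a then 1 else 0) / (2::real)^(length v + 1) \<le> 1 / 2^(length v + 1)"
    by (simp add: divide_right_mono)
  moreover have "(1::real) - 1/2^length v + 1 / 2^(length v + 1) = 1 - 1/2^(length v + 1)"
    by (simp add: field_simps)
  ultimately show ?case using snoc bin_val_snoc[of v a] by auto
qed

lemma bin_val_dyadic: "\<exists>a::int. bin_val w = a / 2^length w"
proof (induction w rule: rev_induct)
  case Nil then show ?case by (simp add: bin_val_def)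
next
  case (snoc c v)
  then obtain a :: int where a: "bin_val v = a / 2^length v" by blast
  show ?case
    apply (rule exI[of _ "2*a + (if c then 1 else 0)"])
    using a bin_val_snoc[of v c] by (simp add: field_simps)
qed

definition dig :: "(nat \<Rightarrow> bool) \<Rightarrow> nat \<Rightarrow> real" where
  "dig d i = (if d i then 1 else 0) / 2^(i+1)"

lemma dig_le: "dig d i \<le> (1/2)^Suc i"
  by (simp add: dig_def power_one_over)

lemma dig_nonneg: "0 \<le> dig d i" by (simp add: dig_def)

lemma summable_dig: "summable (dig d)"
  by (rule summable_comparison_test[of _ "\<lambda>i. (1/2::real)^Suc i"])
     (use dig_le dig_nonneg sums_summable[OF power_half_series] in auto)

lemma ibv: "inf_bin_val d = suminf (dig d)"
  unfolding inf_bin_val_def dig_def by simp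

lemma ibv_le1: "inf_bin_val d \<le> 1"
proof -
  have "suminf (dig d) \<le> (\<Sum>i. (1/2::real)^Suc i)"
    by (rule suminf_le) (use dig_le summable_dig sums_summable[OF power_half_series] in auto)
  then show ?thesis using ibv sums_unique[OF power_half_series] by simp
qed

lemma ibv_pos: assumes "d i" shows "0 < inf_bin_val d"
  unfolding ibv by (rule suminf_pos2[of _ i]) (use summable_dig dig_nonneg assms in \<open>auto simp: dig_def\<close>)

lemma tail_split: "inf_bin_val d = (\<Sum>j<i. dig d j) + dig d i + (\<Sum>j. dig d (j + Suc i))"
  unfolding ibv using suminf_split_initial_segment[OF summable_dig, of d "Suc i"] by simp

lemma tail_le: "(\<Sum>j. dig d (j + Suc i)) \<le> 1/2^Suc i"
proof -
  have s: "(\<lambda>j. (1/2::real)^Suc i * (1/2)^Suc j) sums ((1/2)^Suc i * 1)"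
    by (rule sums_mult[OF power_half_series])
  have "(\<Sum>j. dig d (j + Suc i)) \<le> (\<Sum>j. (1/2::real)^Suc i * (1/2)^Suc j)"
  proof (rule suminf_le)
    fix j show "dig d (j + Suc i) \<le> (1/2::real)^Suc i * (1/2)^Suc j"
      using dig_le[of d "j + Suc i"] by (simp add: power_add[symmetric] add.commute)
  next
    show "summable (\<lambda>j. dig d (j + Suc i))" by (subst summable_iff_shift) (rule summable_dig)
  qed (use s sums_summable in auto)
  then show ?thesis using sums_unique[OF s] by (simp add: power_one_over)
qed

lemma tail_pos: assumes "d m" "m > i" shows "0 < (\<Sum>j. dig d (j + Suc i))"
proof (rule suminf_pos2[of _ "m - Suc i"])
  show "summable (\<lambda>j. dig d (j + Suc i))" by (subst summable_iff_shift) (rule summable_dig)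
qed (use assms dig_nonneg in \<open>auto simp: dig_def\<close>)

lemma ibv_less:
  assumes "\<forall>j<i. d j = e j" "d i" "\<not> e i" "\<forall>N. \<exists>m\<ge>N. d m"
  shows "inf_bin_val e < inf_bin_val d"
proof -
  obtain m where m: "m \<ge> Suc i" "d m" using assms(4) by blast
  have eq: "(\<Sum>j<i. dig d j) = (\<Sum>j<i. dig e j)" using assms(1) by (simp add: dig_def)
  have "inf_bin_val e \<le> (\<Sum>j<i. dig e j) + 0 + 1/2^Suc i"
    using tail_split[of e i] tail_le[of e i] assms(3) by (simp add: dig_def)
  also have "\<dots> < (\<Sum>j<i. dig d j) + dig d i + (\<Sum>j. dig d (j + Suc i))"
    using eq tail_pos[of d m i] m assms(2) by (simp add: dig_def)
  also have "\<dots> = inf_bin_val d" using tail_split[of d i] by simp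
  finally show ?thesis .
qed

lemma ibv_inj:
  assumes "\<forall>N. \<exists>m\<ge>N. d m" "\<forall>N. \<exists>m\<ge>N. e m" "inf_bin_val d = inf_bin_val e"
  shows "d = e"
proof (rule ccontr)
  assume "d \<noteq> e"
  then have "\<exists>i. d i \<noteq> e i" by auto
  then obtain i where i: "d i \<noteq> e i" "\<forall>j<i. d j = e j"
    using exists_least_iff[of "\<lambda>i. d i \<noteq> e i"] by auto
  show False
  proof (cases "d i")
    case True
    then show False using ibv_less[of i d e] i assms by auto
  next
    case False
    then show False using ibv_less[of i e d] i assms by auto
  qed
qed

lemma bin_exp_ibv:
  assumes "\<forall>N. \<exists>m\<ge>N. d m"
  shows "bin_exp (inf_bin_val d) = d"
  unfolding bin_exp_def
  by (rule the_equality) (use assms ibv_inj in auto)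


definition wrd :: "nat \<Rightarrow> (nat \<Rightarrow> bool list) \<Rightarrow> nat \<Rightarrow> bool" where
  "wrd k B i = B (i div k) ! (i mod k)"
lemma wrd_at: "0 < k \<Longrightarrow> j < k \<Longrightarrow> wrd k B (m*k+j) = B m ! j"
  unfolding wrd_def by simp
lemma block_wrd: "0 < k \<Longrightarrow> length (B m) = k \<Longrightarrow> block k (wrd k B) m = B m"
  unfolding block_def by (rule nth_equalityI) (simp_all add: wrd_at)
lemma block_per: "0 < k \<Longrightarrow> length w = k \<Longrightarrow> \<forall>i. D i = w ! (i mod k) \<Longrightarrow> block k D m = w"
  unfolding block_def by (rule nth_equalityI) simp_all

lemma not_countable_natsets: "\<not> countable (UNIV :: nat set set)"
proof
  assume c: "countable (UNIV :: nat set set)"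
  have "(UNIV :: nat set set) \<noteq> {}" by simp
  with c obtain f :: "nat \<Rightarrow> nat set" where f: "range f = UNIV"
    using uncountable_def by metis
  have "{n. n \<notin> f n} \<in> range f" by (simp add: f)
  then obtain a where "{n. n \<notin> f n} = f a" by blast
  then have "a \<in> f a \<longleftrightarrow> a \<notin> f a" by (metis mem_Collect_eq)
  then show False by simp
qed

lemma concat_upt_Suc: "concat (map F [0..<Suc n]) = concat (map F [0..<n]) @ F n"
  by simp

theorem lemma3p3:
  fixes k :: nat and \<sigma> :: "bool list \<Rightarrow> bool list"
  assumes "k \<ge> 2"
    and "erasing_subst k \<sigma>"
    and "w_eps k \<sigma> \<noteq> replicate k True"
  shows "\<forall>x \<in> f_sigma k \<sigma> ` {0..1} - Q2_0.
           uncountable {y \<in> {0..1}. f_sigma k \<sigma> y = x}"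
proof
  fix x assume x: "x \<in> f_sigma k \<sigma> ` {0..1} - Q2_0"
  define e where "e = w_eps k \<sigma>"
  have k0: "0 < k" using assms by simp
  have ex1: "\<exists>!w. length w = k \<and> \<sigma> w = []" using assms(2) erasing_subst_def by blast
  have e_prop: "length e = k \<and> \<sigma> e = []" unfolding e_def w_eps_def using theI'[OF ex1] .
  obtain y where y: "y \<in> {0..1}" "x = f_sigma k \<sigma> y" "x \<notin> Q2_0" using x by blast
  have Q0: "0 \<in> Q2_0" unfolding Q2_0_def by (auto intro!: exI[of _ 0])
  define d where "d = bin_exp y"
  have cond: "0 < y \<and> y \<le> 1 \<and> \<not> (\<forall>i. d i = e ! (i mod k))"
    using y Q0 unfolding f_sigma_def d_def e_def by (auto split: if_splits)
  have xv: "x = subst_val k \<sigma> d"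
    using y cond unfolding f_sigma_def d_def e_def by auto
  define P where "P n = bin_val (concat (map (\<lambda>m. \<sigma> (block k d m)) [0..<n]))" for n
  have P_Suc: "P (Suc n) = bin_val (concat (map (\<lambda>m. \<sigma> (block k d m)) [0..<n]) @ \<sigma> (block k d n))" for n
    unfolding P_def by simp
  have x_lim: "x = lim P" using xv unfolding subst_val_def P_def by simp
  define N where "N = {m. block k d m \<noteq> e}"
  have Ninf: "infinite N"
  proof
    assume "finite N"
    then obtain M where M: "N \<subseteq> {..<M}" using finite_nat_bounded by blast
    have PM: "P (M + j) = P M" for j
    proof (induction j)
      case 0 then show ?case by simp
    next
      case (Suc j)
      have "block k d (M + j) = e" using M unfolding N_def by force
      then show ?case using Suc e_prop P_Suc[of "M+j"] by (simp add: P_def)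
    qed
    have "eventually (\<lambda>n. P n = P M) sequentially"
      unfolding eventually_sequentially using PM by (metis le_add_diff_inverse)
    then have "P \<longlonglongrightarrow> P M" by (rule tendsto_eventually)
    then have xP: "x = P M" using x_lim limI by simp
    define w where "w = concat (map (\<lambda>m. \<sigma> (block k d m)) [0..<M])"
    obtain a :: int where a: "bin_val w = a / 2^length w" using bin_val_dyadic by blast
    have "bin_val w \<le> 1 - 1/2^length w" "0 \<le> bin_val w" using bin_val_bounds by auto
    moreover have "(0::real) < 1/2^length w" by simp
    ultimately have lt: "bin_val w < 1" by linarith
    have "bin_val w \<in> Q2_0" unfolding Q2_0_def using a lt \<open>0 \<le> bin_val w\<close> by blast
    then show False using xP y(3) unfolding P_def w_def by simp
  qed
  have Pinc: "incseq P" by (rule incseq_SucI) (simp add: P_Suc bin_val_append_ge P_def)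
  have Ple: "\<forall>n. P n \<le> 1"
  proof
    fix n
    have "P n \<le> 1 - 1/2^length (concat (map (\<lambda>m. \<sigma> (block k d m)) [0..<n]))"
      unfolding P_def using bin_val_bounds by blast
    also have "\<dots> \<le> 1" by simp
    finally show "P n \<le> 1" .
  qed
  obtain L where "P \<longlonglongrightarrow> L" using incseq_convergent[OF Pinc Ple] by blast
  then have Px: "P \<longlonglongrightarrow> x" using x_lim limI[of P L] by simp

  define G where "G A m = (if even m then (if m div 2 \<in> A then e else block k d (m div 2))
                              else (if m div 2 \<in> A then block k d (m div 2) else e))"
    for A :: "nat set" and m
  define W where "W A = wrd k (G A)" for A
  define Y where "Y A = inf_bin_val (W A)" for A
  have G_len: "length (G A m) = k" for A m using e_prop by (simp add: G_def block_def)
  have blkW: "block k (W A) m = G A m" for A m using block_wrd[OF k0 G_len] W_def by simp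
  have Gin: "\<exists>m'. G A m' = block k d n \<and> 2*n \<le> m'" for A n
  proof (cases "n \<in> A")
    case True then show ?thesis by (intro exI[of _ "2*n+1"]) (simp add: G_def)
  next
    case False then show ?thesis by (intro exI[of _ "2*n"]) (simp add: G_def)
  qed
  have Ge: "\<exists>m'. G A m' = e \<and> 2*n \<le> m'" for A n
  proof (cases "n \<in> A")
    case True then show ?thesis by (intro exI[of _ "2*n"]) (simp add: G_def)
  next
    case False then show ?thesis by (intro exI[of _ "2*n+1"]) (simp add: G_def)
  qed
  have Winf: "\<forall>M. \<exists>i\<ge>M. W A i" for A
  proof
    fix M
    have mk: "M \<le> m' * k + j" if "2*M \<le> m'" for m' j :: nat
    proof -
      have "m' \<le> m' * k" using k0 by simp
      then show ?thesis using that by linarith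
    qed
    show "\<exists>i\<ge>M. W A i"
    proof (cases "\<exists>j<k. e ! j")
      case True
      then obtain j where j: "j<k" "e!j" by blast
      obtain m' where m': "G A m' = e" "2*M \<le> m'" using Ge by blast
      have "W A (m'*k+j)" using j wrd_at[OF k0 j(1), of "G A" m'] m' W_def by simp
      then show ?thesis using mk[OF m'(2)] by blast
    next
      case False
      then have eF: "e = replicate k False" using e_prop by (intro nth_equalityI) auto
      obtain n where n: "n \<in> N" "n \<ge> M" using Ninf infinite_nat_iff_unbounded_le by blast
      then have "block k d n \<noteq> replicate k False" using eF N_def by simp
      then have nb: "block k d n \<noteq> replicate k False" .
      have lb: "length (block k d n) = k" by (simp add: block_def)
      have "\<exists>j<k. block k d n ! j"
      proof (rule ccontr)
        assume "\<not> (\<exists>j<k. block k d n ! j)"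
        then have "block k d n = replicate k False" using lb by (intro nth_equalityI) auto
        then show False using nb by simp
      qed
      then obtain j where j: "j<k" "block k d n ! j" by blast
      obtain m' where m': "G A m' = block k d n" "2*n \<le> m'" using Gin by blast
      have "W A (m'*k+j)" using j wrd_at[OF k0 j(1), of "G A" m'] m' W_def by simp
      moreover have "2*M \<le> m'" using n m' by linarith
      ultimately show ?thesis using mk by blast
    qed
  qed
  have Yexp: "bin_exp (Y A) = W A" for A using bin_exp_ibv Winf Y_def by simp
  have Y01: "0 < Y A \<and> Y A \<le> 1" for A
  proof -
    obtain i where "W A i" using Winf by blast
    then show ?thesis using ibv_pos[of "W A" i] ibv_le1[of "W A"] unfolding Y_def by simp
  qed
  have Ynotper: "\<not> (\<forall>i. W A i = e ! (i mod k))" for A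
  proof
    assume per: "\<forall>i. W A i = e ! (i mod k)"
    obtain n where n: "n \<in> N" using Ninf by (metis finite.emptyI ex_in_conv)
    obtain m' where m': "G A m' = block k d n" using Gin by blast
    have "block k (W A) m' = e" using block_per[OF k0 _ per] e_prop by simp
    then show False using blkW m' n N_def by simp
  qed
  have Csub: "concat (map (\<lambda>m. \<sigma> (G A m)) [0..<2*n]) = concat (map (\<lambda>m. \<sigma> (block k d m)) [0..<n])" for A n
  proof (induction n)
    case 0 then show ?case by simp
  next
    case (Suc n)
    have "[0..<2 * Suc n] = [0..<Suc (Suc (2*n))]" by simp
    then have "concat (map (\<lambda>m. \<sigma> (G A m)) [0..<2 * Suc n]) =
      concat (map (\<lambda>m. \<sigma> (G A m)) [0..<2*n]) @ \<sigma> (G A (2*n)) @ \<sigma> (G A (Suc (2*n)))"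
      by (simp only: concat_upt_Suc) simp
    also have "\<dots> = concat (map (\<lambda>m. \<sigma> (block k d m)) [0..<n]) @ \<sigma> (block k d n)"
      using Suc e_prop by (simp add: G_def)
    finally show ?case by simp
  qed
  define h where "h A m = m div 2 + (if odd m \<and> m div 2 \<notin> A then 1 else 0)" for A :: "nat set" and m :: nat
  have Qeq: "bin_val (concat (map (\<lambda>m. \<sigma> (G A m)) [0..<m])) = P (h A m)" for A m
  proof -
    define n where "n = m div 2"
    show ?thesis
    proof (cases "even m")
      case True
      then have m: "m = 2 * n" by (simp add: n_def)
      have hA: "h A m = n" using True by (simp add: h_def n_def)
      have "concat (map (\<lambda>m. \<sigma> (G A m)) [0..<m]) = concat (map (\<lambda>m. \<sigma> (block k d m)) [0..<n])"
        unfolding m by (rule Csub)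
      then show ?thesis unfolding P_def hA by simp
    next
      case False
      then have m: "m = Suc (2 * n)" by (simp add: n_def)
      have "concat (map (\<lambda>m. \<sigma> (G A m)) [0..<m]) =
         concat (map (\<lambda>m. \<sigma> (G A m)) [0..<2*n]) @ \<sigma> (G A (2*n))"
        unfolding m by (rule concat_upt_Suc)
      also have "\<dots> = concat (map (\<lambda>m. \<sigma> (block k d m)) [0..<n]) @ \<sigma> (G A (2*n))"
        by (simp only: Csub)
      finally have c: "concat (map (\<lambda>m. \<sigma> (G A m)) [0..<m]) =
         concat (map (\<lambda>m. \<sigma> (block k d m)) [0..<n]) @ \<sigma> (G A (2*n))" .
      show ?thesis
      proof (cases "n \<in> A")
        case True
        have hA: "h A m = n" using True False by (simp add: h_def n_def)
        show ?thesis unfolding c P_def hA using True e_prop by (simp add: G_def)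
      next
        case nA: False
        have hA: "h A m = Suc n" using nA False by (simp add: h_def n_def)
        show ?thesis unfolding c P_def hA using nA by (simp add: G_def)
      qed
    qed
  qed
  have hlim: "filterlim (h A) sequentially sequentially" for A
    unfolding filterlim_at_top eventually_sequentially
  proof
    fix Z show "\<exists>N. \<forall>n\<ge>N. Z \<le> h A n"
      by (rule exI[of _ "2*Z"]) (auto simp: h_def)
  qed
  have fY: "f_sigma k \<sigma> (Y A) = x" for A
  proof -
    have lim: "(\<lambda>m. P (h A m)) \<longlonglongrightarrow> x"
      using filterlim_compose[OF Px hlim] by (simp add: o_def)
    have "subst_val k \<sigma> (W A) = lim (\<lambda>m. P (h A m))"
      unfolding subst_val_def blkW Qeq ..
    also have "\<dots> = x" using lim limI by blast
    finally show ?thesis using Y01 Yexp Ynotper unfolding f_sigma_def e_def by simp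
  qed
  have Yinj: "inj_on Y (Pow N)"
  proof (rule inj_onI)
    fix A B assume AB: "A \<in> Pow N" "B \<in> Pow N" "Y A = Y B"
    then have WAB: "W A = W B" using Yexp by metis
    show "A = B"
    proof (rule ccontr)
      assume "A \<noteq> B"
      then obtain n where n: "(n \<in> A \<and> n \<notin> B) \<or> (n \<in> B \<and> n \<notin> A)" by blast
      then have nN: "n \<in> N" using AB by blast
      have "G A (2*n) \<noteq> G B (2*n)" using n nN N_def by (auto simp: G_def)
      then show False using blkW WAB by metis
    qed
  qed
  obtain g :: "nat \<Rightarrow> nat" where g: "inj g" "range g \<subseteq> N"
    using infinite_countable_subset[OF Ninf] by blast
  have sub: "(\<lambda>S. Y (g ` S)) ` UNIV \<subseteq> {y \<in> {0..1}. f_sigma k \<sigma> y = x}"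
  proof
    fix z assume "z \<in> (\<lambda>S. Y (g ` S)) ` UNIV"
    then obtain S where z: "z = Y (g ` S)" by blast
    show "z \<in> {y \<in> {0..1}. f_sigma k \<sigma> y = x}"
      using Y01[of "g ` S"] fY[of "g ` S"] unfolding z by simp
  qed
  have inj: "inj (\<lambda>S. Y (g ` S))"
  proof (rule injI)
    fix S T assume "Y (g ` S) = Y (g ` T)"
    moreover have "g ` S \<in> Pow N" "g ` T \<in> Pow N" using g by auto
    ultimately have "g ` S = g ` T" using Yinj inj_onD by metis
    then show "S = T" using g(1) by (simp add: inj_image_eq_iff)
  qed
  show "uncountable {y \<in> {0..1}. f_sigma k \<sigma> y = x}"
  proof
    assume "countable {y \<in> {0..1}. f_sigma k \<sigma> y = x}"
    then have "countable ((\<lambda>S. Y (g ` S)) ` UNIV)" using sub countable_subset by blast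
    then have "countable (UNIV :: nat set set)" using countable_image_inj_on inj by blast
    then show False using not_countable_natsets by blast
  qed
qed

end
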